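(* Let $B\in\mathbb R^{n\times n}$ be symmetrizable and let $S=\mathrm{diag}(s_1,\dots,s_n)$ be positive definite. Order the (real) eigenvalues of $B$, $BS$, $SB$ and $S^{1/2}BS^{1/2}$ nondecreasingly. Then for every $k\in\{1,\dots,n\}$ there exists $\theta_k\in[\min_i s_i,\max_i s_i]$ such that $$\lambda_k(BS)=\lambda_k(SB)=\lambda_k(S^{1/2}BS^{1/2})=\theta_k\lambda_k(B).$$
   Context: A matrix $B\in\mathbb R^{n\times n}$ is (diagonally) symmetrizable if $DB$ is symmetric for some diagonal matrix $D$ with positive diagonal entries. $S^{1/2}$ denotes the diagonal positive definite square root of $S$. *)

theory Defs
  imports "Jordan_Normal_Form.Char_Poly"
begin

definition pos_diag_mat :: "nat \<Rightarrow> real mat \<Rightarrow> bool" where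
  "pos_diag_mat n D \<longleftrightarrow> D \<in> carrier_mat n n \<and> diagonal_mat D \<and> (\<forall>i<n. D $$ (i,i) > 0)"

definition symmetrizable :: "nat \<Rightarrow> real mat \<Rightarrow> bool" where
  "symmetrizable n B \<longleftrightarrow> (\<exists>D. pos_diag_mat n D \<and> transpose_mat (D * B) = D * B)"

definition diag_sqrt :: "real mat \<Rightarrow> real mat" where
  "diag_sqrt S = mat (dim_row S) (dim_col S) (\<lambda>(i,j). if i = j then sqrt (S $$ (i,i)) else 0)"

definition sorted_eigenvalues :: "real mat \<Rightarrow> real list" where
  "sorted_eigenvalues A = (THE xs. sorted xs \<and> char_poly A = (\<Prod>x\<leftarrow>xs. [:- x, 1:]))"

end

theory Submission
  imports Defs "Jordan_Normal_Form.Schur_Decomposition"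
begin


lemma prod_lin_nz: "(\<Prod>x\<leftarrow>xs. [:- x, 1::'a::idom:]) \<noteq> 0"
  using prod_list_zero_iff[of "map (\<lambda>x. [:- x, 1::'a:]) xs"] by auto

lemma order_prod_lin: "Polynomial.order a (\<Prod>x\<leftarrow>xs. [:- x, 1::'a::idom:]) = count (mset xs) a"
proof (induction xs)
  case Nil
  then show ?case by (simp add: order_0I)
next
  case (Cons x xs)
  have e: "(\<Prod>x\<leftarrow>x#xs. [:- x, 1:]) = [:- x, 1:] * (\<Prod>x\<leftarrow>xs. [:- x, 1:])"
    by (simp only: list.map prod_list.Cons)
  have nz: "[:- x, 1:] * (\<Prod>x\<leftarrow>xs. [:- x, 1:]) \<noteq> 0" using prod_lin_nz[of "x#xs"] unfolding e .
  have o: "Polynomial.order a [:- x, 1:] = (if x = a then 1 else 0)" unfolding order_linear' by simp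
  have h: "Polynomial.order a (\<Prod>x\<leftarrow>x#xs. [:- x, 1:]) = Polynomial.order a [:- x, 1:] + Polynomial.order a (\<Prod>x\<leftarrow>xs. [:- x, 1:])"
    unfolding e by (rule order_mult[OF nz])
  have c: "count (mset (x#xs)) a = (if x = a then 1 else 0) + count (mset xs) a" by simp
  show ?case unfolding c using h unfolding o Cons.IH .
qed

lemma sorted_eig_eq:
  assumes "sorted xs" "char_poly A = (\<Prod>x\<leftarrow>xs. [:- x, 1:])"
  shows "sorted_eigenvalues A = xs"
  unfolding sorted_eigenvalues_def
proof (rule the_equality)
  show "sorted xs \<and> char_poly A = (\<Prod>x\<leftarrow>xs. [:- x, 1:])" using assms by (rule conjI)
  fix ys assume ys: "sorted ys \<and> char_poly A = (\<Prod>x\<leftarrow>ys. [:- x, 1:])"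
  have "mset ys = mset xs"
  proof (rule multiset_eqI)
    fix a 
    have "(\<Prod>x\<leftarrow>ys. [:- x, 1:]) = (\<Prod>x\<leftarrow>xs. [:- x, 1:])" using ys assms(2) by (metis (no_types))
    then show "count (mset ys) a = count (mset xs) a"
      unfolding order_prod_lin[of a xs, symmetric] order_prod_lin[of a ys, symmetric] by (rule arg_cong)
  qed
  then show "ys = xs" using properties_for_sort[of ys xs] properties_for_sort[of xs xs] ys assms(1)
    by (metis (no_types))
qed

lemma sorted_eig_exists:
  assumes "char_poly A = (\<Prod>x\<leftarrow>xs. [:- x, 1:])"
  shows "char_poly A = (\<Prod>x\<leftarrow>sort xs. [:- x, 1:]) \<and> sorted_eigenvalues A = sort xs"
proof -
  have "(\<Prod>x\<leftarrow>sort xs. [:- x, 1::real:]) = (\<Prod>x\<leftarrow>xs. [:- x, 1:])"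
    by (metis (no_types) mset_map mset_sort prod_mset_prod_list)
  then have "char_poly A = (\<Prod>x\<leftarrow>sort xs. [:- x, 1:])" using assms by (metis (no_types))
  then show ?thesis using sorted_eig_eq[of "sort xs" A] sorted_sort[of xs] by blast
qed



lemma real_ev_aux:
  fixes v :: "nat \<Rightarrow> complex" and b :: "nat \<Rightarrow> nat \<Rightarrow> real"
  assumes sym: "\<And>i j. i < n \<Longrightarrow> j < n \<Longrightarrow> b i j = b j i"
    and ev: "\<And>i. i < n \<Longrightarrow> (\<Sum>j<n. of_real (b i j) * v j) = a * v i"
    and nz: "i0 < n" "v i0 \<noteq> 0"
  shows "cnj a = a"
proof -
  define S where "S = (\<Sum>i<n. cnj (v i) * (\<Sum>j<n. of_real (b i j) * v j))"
  define N where "N = (\<Sum>i<n. (cmod (v i))^2)"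
  have S1: "S = a * of_real N"
  proof -
    have "S = (\<Sum>i<n. cnj (v i) * (a * v i))" unfolding S_def
      by (rule sum.cong[OF refl]) (simp only: ev lessThan_iff)
    also have "\<dots> = (\<Sum>i<n. a * (cnj (v i) * v i))" by (simp add: ac_simps)
    also have "\<dots> = a * of_real N"
    proof -
      have cz: "\<And>z. cnj z * z = complex_of_real ((cmod z)^2)" by (metis complex_norm_square mult.commute)
      show ?thesis unfolding cz N_def of_real_sum sum_distrib_left ..
    qed
    finally show ?thesis .
  qed
  have "cnj S = (\<Sum>i<n. \<Sum>j<n. of_real (b i j) * (v i * cnj (v j)))"
    unfolding S_def by (simp add: sum_distrib_left mult.commute mult.left_commute)
  also have "\<dots> = (\<Sum>j<n. \<Sum>i<n. of_real (b i j) * (v i * cnj (v j)))"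
    by (rule sum.swap)
  also have "\<dots> = S" unfolding S_def
    by (simp add: sum_distrib_left mult.commute mult.left_commute sym)
  finally have "cnj S = S" .
  then have "cnj a * of_real N = a * of_real N" unfolding S1 by simp
  moreover have "N > 0" unfolding N_def
  proof -
    have "(cmod (v i0))^2 > 0" using nz by simp
    also have "(cmod (v i0))^2 \<le> (\<Sum>i<n. (cmod (v i))^2)"
      by (rule member_le_sum) (use nz in auto)
    finally show "0 < (\<Sum>i<n. (cmod (v i))^2)" .
  qed
  ultimately show ?thesis by simp
qed


interpretation of_real_poly_hom: map_poly_inj_idom_hom "of_real :: real \<Rightarrow> complex"
  by (rule map_poly_inj_idom_hom.intro, rule of_real_hom.inj_idom_hom_axioms)

lemma sym_split:
  fixes A :: "real mat"
  assumes A: "A \<in> carrier_mat n n" and sym: "transpose_mat A = A"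
  shows "\<exists>es. char_poly A = (\<Prod>x\<leftarrow>es. [:- x, 1:])"
proof -
  define Ac where "Ac = map_mat complex_of_real A"
  have Ac: "Ac \<in> carrier_mat n n" using A unfolding Ac_def by simp
  obtain as where cp: "char_poly Ac = (\<Prod>a\<leftarrow>as. [:- a, 1:])"
    using char_poly_factorized[OF Ac] by blast
  have cpA: "char_poly Ac = map_poly of_real (char_poly A)"
    unfolding Ac_def using of_real_hom.char_poly_hom[OF A] by simp
  have real: "cnj a = a" if a: "a \<in> set as" for a
  proof -
    have "poly (\<Prod>a\<leftarrow>as. [:- a, 1:]) a = (\<Prod>p\<leftarrow>map (\<lambda>a. [:- a, 1:]) as. poly p a)"
      by (rule poly_hom.hom_prod_list)
    also have "\<dots> = 0" using a by (auto simp: prod_list_zero_iff)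
    finally have "poly (char_poly Ac) a = 0" unfolding cp .
    then have "eigenvalue Ac a" using eigenvalue_root_char_poly[OF Ac] by simp
    then obtain v where v: "v \<in> carrier_vec n" "v \<noteq> 0\<^sub>v n" "Ac *\<^sub>v v = a \<cdot>\<^sub>v v"
      unfolding eigenvalue_def eigenvector_def using Ac by auto
    from v(1,2) obtain i0 where i0: "i0 < n" "v $ i0 \<noteq> 0"
      by (metis carrier_vecD eq_vecI index_zero_vec(1) index_zero_vec(2))
    show ?thesis
    proof (rule real_ev_aux[of n "\<lambda>i j. A $$ (i,j)" "\<lambda>j. v $ j" a i0])
      fix i j assume "i < n" "j < n"
      then show "A $$ (i, j) = A $$ (j, i)" using A sym
        by (metis carrier_matD(1) carrier_matD(2) index_transpose_mat(1))
    next
      fix i assume i: "i < n"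
      have "(Ac *\<^sub>v v) $ i = (a \<cdot>\<^sub>v v) $ i" using v by simp
      then show "(\<Sum>j<n. complex_of_real (A $$ (i, j)) * v $ j) = a * v $ i"
        using i v(1) A unfolding Ac_def
        by (auto simp: scalar_prod_def atLeast0LessThan)
    qed (use i0 in auto)
  qed
  define es where "es = map Re as"
  have "map_poly of_real (\<Prod>x\<leftarrow>es. [:- x, 1:]) = (\<Prod>x\<leftarrow>es. map_poly complex_of_real [:- x, 1:])"
    by (simp add: of_real_poly_hom.hom_prod_list o_def)
  also have "\<dots> = (\<Prod>x\<leftarrow>es. [:- complex_of_real x, 1:])" by simp
  also have "\<dots> = (\<Prod>a\<leftarrow>as. [:- a, 1:])" unfolding es_def
    using real by (induction as) (simp_all add: Reals_cnj_iff[symmetric])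
  finally have "map_poly (of_real :: real \<Rightarrow> complex) (\<Prod>x\<leftarrow>es. [:- x, 1:]) = map_poly of_real (char_poly A)"
    using cp cpA by (metis (no_types))
  then have "(\<Prod>x\<leftarrow>es. [:- x, 1:]) = char_poly A" by (rule of_real_poly_hom.injectivity)
  then have "char_poly A = (\<Prod>x\<leftarrow>es. [:- x, 1:])" by (rule HOL.sym)
  then show ?thesis by (rule exI)
qed




lemma sq_mult_carrier[simp]: "A \<in> carrier_mat n n \<Longrightarrow> B \<in> carrier_mat n n \<Longrightarrow> A * B \<in> carrier_mat n n"
  by auto

lemma conj_back:
  fixes W A :: "'a::comm_ring_1 mat"
  assumes W: "W \<in> carrier_mat n n" and A: "A \<in> carrier_mat n n" and WWt: "W * transpose_mat W = 1\<^sub>m n"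
  shows "W * (transpose_mat W * A * W) * transpose_mat W = A"
proof -
  have T: "transpose_mat W \<in> carrier_mat n n" using W by simp
  have TA: "transpose_mat W * A \<in> carrier_mat n n" using T A by simp
  have "W * (transpose_mat W * A * W) = (W * (transpose_mat W * A)) * W"
    using assoc_mult_mat[OF W TA W] by simp
  also have "W * (transpose_mat W * A) = (W * transpose_mat W) * A"
    using assoc_mult_mat[OF W T A] by simp
  also have "\<dots> = A" unfolding WWt using A by simp
  finally have "W * (transpose_mat W * A * W) = A * W" .
  then have "W * (transpose_mat W * A * W) * transpose_mat W = A * (W * transpose_mat W)"
    using assoc_mult_mat[OF A W T] by simp
  also have "\<dots> = A" unfolding WWt using A by simp
  finally show ?thesis .
qed

lemma deflate:
  fixes A :: "real mat"
  assumes A0: "A \<in> carrier_mat (Suc m) (Suc m)" and sym: "transpose_mat A = A" and ev: "eigenvalue A e"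
  shows "\<exists>W A3. W \<in> carrier_mat (Suc m) (Suc m) \<and> transpose_mat W * W = 1\<^sub>m (Suc m) \<and>
     W * transpose_mat W = 1\<^sub>m (Suc m) \<and> A3 \<in> carrier_mat m m \<and> transpose_mat A3 = A3 \<and>
     A = W * four_block_mat (mat 1 1 (\<lambda>_. e)) (0\<^sub>m 1 m) (0\<^sub>m m 1) A3 * transpose_mat W"
proof -
  define n where "n = Suc m"
  have A: "A \<in> carrier_mat n n" using A0 n_def by simp
  define v where "v = find_eigenvector A e"
  from find_eigenvector[OF A ev] have "eigenvector A v e" unfolding v_def .
  then have v: "v \<in> carrier_vec n" and v0: "v \<noteq> 0\<^sub>v n" and Av: "A *\<^sub>v v = e \<cdot>\<^sub>v v"
    using A unfolding eigenvector_def by auto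
  interpret cof_vec_space n "TYPE(real)" .
  define b where "b = basis_completion v"
  from basis_completion[OF v v0, folded b_def]
  have b: "set b \<subseteq> carrier_vec n" "distinct b" "\<not> lin_dep (set b)" "length b = n" "hd b = v" by auto
  obtain vs where bv: "b = v # vs" using b(4,5) n_def by (cases b) auto
  define ws where "ws = gram_schmidt n b"
  from gram_schmidt_result[OF b(1) b(2) b(3) ws_def]
  have ws: "corthogonal ws" "set ws \<subseteq> carrier_vec n" "length ws = n" using b(4) by auto
  have hdws: "hd ws = v" unfolding ws_def bv using v by simp
  have ws0: "ws ! 0 = v" using hdws ws(3) n_def by (cases ws) auto
  have wsc: "\<And>i. i < n \<Longrightarrow> ws ! i \<in> carrier_vec n" using ws by auto
  have wso: "\<And>i j. i < n \<Longrightarrow> j < n \<Longrightarrow> (ws ! i \<bullet> ws ! j = 0) = (i \<noteq> j)"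
    using corthogonalD[OF ws(1)] ws(3) by simp
  have wspos: "\<And>i. i < n \<Longrightarrow> ws ! i \<bullet> ws ! i > 0"
  proof -
    fix i assume i: "i < n"
    have "ws ! i \<bullet> ws ! i \<noteq> 0" using wso[OF i i] by simp
    moreover have "ws ! i \<bullet> ws ! i \<ge> 0" unfolding scalar_prod_def
      by (rule sum_nonneg) simp
    ultimately show "ws ! i \<bullet> ws ! i > 0" by simp
  qed
  define us where "us = map (\<lambda>w. (1 / sqrt (w \<bullet> w)) \<cdot>\<^sub>v w) ws"
  have us_len: "length us = n" unfolding us_def using ws(3) by simp
  have us_nth: "\<And>i. i < n \<Longrightarrow> us ! i = (1 / sqrt (ws ! i \<bullet> ws ! i)) \<cdot>\<^sub>v ws ! i"
    unfolding us_def using ws(3) by simp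
  have us_carr: "\<And>i. i < n \<Longrightarrow> us ! i \<in> carrier_vec n" using us_nth wsc by simp
  have us_orth: "\<And>i j. i < n \<Longrightarrow> j < n \<Longrightarrow> us ! i \<bullet> us ! j = (if i = j then 1 else 0)"
  proof -
    fix i j assume i: "i < n" and j: "j < n"
    have "us ! i \<bullet> us ! j = (1 / sqrt (ws ! i \<bullet> ws ! i)) * (1 / sqrt (ws ! j \<bullet> ws ! j)) * (ws ! i \<bullet> ws ! j)"
      unfolding us_nth[OF i] us_nth[OF j] using wsc[OF i] wsc[OF j]
      by (simp add: smult_scalar_prod_distrib scalar_prod_smult_distrib)
    have sq: "\<And>x::real. x > 0 \<Longrightarrow> (1 / sqrt x) * (1 / sqrt x) * x = 1"
    proof -
      fix x :: real assume x: "x > 0"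
      have "sqrt x * sqrt x = x" using x by simp
      moreover have "sqrt x \<noteq> 0" using x by simp
      ultimately show "(1 / sqrt x) * (1 / sqrt x) * x = 1" by (metis divide_divide_eq_left divide_self_if times_divide_eq_left mult_1)
    qed
    show "us ! i \<bullet> us ! j = (if i = j then 1 else 0)"
    proof (cases "i = j")
      case True
      then show ?thesis using \<open>us ! i \<bullet> us ! j = _\<close> sq[OF wspos[OF i]] by simp
    next
      case False
      then show ?thesis using \<open>us ! i \<bullet> us ! j = _\<close> wso[OF i j] by simp
    qed
  qed
  define W where "W = mat_of_cols n us"
  have W: "W \<in> carrier_mat n n" unfolding W_def using us_len mat_of_cols_carrier(1)[of n us] by simp
  have colW: "\<And>i. i < n \<Longrightarrow> col W i = us ! i" unfolding W_def using us_len us_carr by simp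
  have WtW: "transpose_mat W * W = 1\<^sub>m n"
    by (rule eq_matI) (use W in \<open>auto simp: colW us_orth\<close>)
  have WWt: "W * transpose_mat W = 1\<^sub>m n"
    using mat_mult_left_right_inverse[OF _ W WtW] W by auto
  define c where "c = 1 / sqrt (v \<bullet> v)"
  define u where "u = us ! 0"
  have u: "u = c \<cdot>\<^sub>v v" unfolding u_def c_def using us_nth[of 0] ws0 n_def by simp
  have uc: "u \<in> carrier_vec n" using u v by simp
  have Au: "A *\<^sub>v u = e \<cdot>\<^sub>v u"
    unfolding u using mult_mat_vec[OF A v, of c] Av v by (simp add: smult_smult_assoc mult.commute)
  define A' where "A' = transpose_mat W * A * W"
  have A'c: "A' \<in> carrier_mat n n" unfolding A'_def using W A by simp
  have WTu: "transpose_mat W *\<^sub>v u = unit_vec n 0"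
  proof -
    have "transpose_mat W *\<^sub>v u = transpose_mat W *\<^sub>v col W 0" using colW[of 0] n_def u_def by simp
    also have "\<dots> = col (transpose_mat W * W) 0"
      by (rule col_mult2[symmetric, of _ n n _ n]) (use W n_def in auto)
    finally show ?thesis using WtW n_def by simp
  qed
  have col0: "\<And>i. i < n \<Longrightarrow> A' $$ (i, 0) = (if i = 0 then e else 0)"
  proof -
    fix i assume i: "i < n"
    have "col A' 0 = (transpose_mat W * A) *\<^sub>v col W 0" unfolding A'_def
      by (rule col_mult2[of _ n n _ n]) (use W A n_def in auto)
    also have "\<dots> = transpose_mat W *\<^sub>v (A *\<^sub>v u)" using colW[of 0] n_def u_def W A uc by simp
    also have "\<dots> = e \<cdot>\<^sub>v unit_vec n 0" unfolding Au mult_mat_vec[of _ n n, OF _ uc] WTu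
      using W mult_mat_vec[of "transpose_mat W" n n u e] uc WTu by simp
    finally have "col A' 0 = e \<cdot>\<^sub>v unit_vec n 0" .
    then have "col A' 0 $ i = (e \<cdot>\<^sub>v unit_vec n 0) $ i" by simp
    then show "A' $$ (i, 0) = (if i = 0 then e else 0)" using i A'c n_def by simp
  qed
  have A'sym: "transpose_mat A' = A'"
    unfolding A'_def using W A sym by (simp add: transpose_mult[of _ n n _ n])
  have A'symi: "\<And>i j. i < n \<Longrightarrow> j < n \<Longrightarrow> A' $$ (i, j) = A' $$ (j, i)"
    by (metis A'c A'sym carrier_matD(1) carrier_matD(2) index_transpose_mat(1))
  define A3 where "A3 = mat m m (\<lambda>(i,j). A' $$ (Suc i, Suc j))"
  have A3c: "A3 \<in> carrier_mat m m" unfolding A3_def by simp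
  have A3sym: "transpose_mat A3 = A3"
    by (rule eq_matI) (auto simp: A3_def n_def intro!: A'symi)
  have F: "A' = four_block_mat (mat 1 1 (\<lambda>_. e)) (0\<^sub>m 1 m) (0\<^sub>m m 1) A3"
  proof (rule eq_matI)
    fix i j assume i: "i < dim_row (four_block_mat (mat 1 1 (\<lambda>_. e)) (0\<^sub>m 1 m) (0\<^sub>m m 1) A3)"
      and j: "j < dim_col (four_block_mat (mat 1 1 (\<lambda>_. e)) (0\<^sub>m 1 m) (0\<^sub>m m 1) A3)"
    then have i: "i < n" and j: "j < n" using A3c n_def by auto
    show "A' $$ (i, j) = four_block_mat (mat 1 1 (\<lambda>_. e)) (0\<^sub>m 1 m) (0\<^sub>m m 1) A3 $$ (i, j)"
    proof (cases "i = 0")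
      case True
      then show ?thesis using col0[OF j] A'symi[OF i j] i j A3c n_def by auto
    next
      case False
      then show ?thesis using col0[OF i] i j A3c n_def by (cases j) (auto simp: A3_def)
    qed
  qed (use A'c A3c n_def in auto)
  have AF: "A = W * A' * transpose_mat W" unfolding A'_def using conj_back[OF W A WWt] by simp
  show ?thesis
    by (rule exI[of _ W], rule exI[of _ A3]) (use W WtW WWt A3c A3sym AF F n_def in auto)
qed




definition dg :: "nat \<Rightarrow> (nat \<Rightarrow> real) \<Rightarrow> real mat" where
  "dg n f = mat n n (\<lambda>(i,j). if i = j then f i else 0)"

lemma dg_carrier[simp]: "dg n f \<in> carrier_mat n n" unfolding dg_def by simp
lemma dg_dims[simp]: "dim_row (dg n f) = n" "dim_col (dg n f) = n" unfolding dg_def by simp_all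

lemma sim_char:
  fixes A B P Q :: "'a::comm_ring_1 mat"
  assumes "A \<in> carrier_mat n n" "B \<in> carrier_mat n n" "P \<in> carrier_mat n n" "Q \<in> carrier_mat n n"
    "P * Q = 1\<^sub>m n" "Q * P = 1\<^sub>m n" "A = P * B * Q"
  shows "char_poly A = char_poly B"
proof -
  have "similar_mat_wit A B P Q" unfolding similar_mat_wit_def Let_def using assms by auto
  then show ?thesis using char_poly_similar unfolding similar_mat_def by blast
qed

lemma conj_comp:
  fixes W P D :: "'a::comm_ring_1 mat"
  assumes W: "W \<in> carrier_mat n n" and P: "P \<in> carrier_mat n n" and D: "D \<in> carrier_mat n n"
  shows "W * (P * D * transpose_mat P) * transpose_mat W = (W * P) * D * transpose_mat (W * P)"
proof -
  have T1: "transpose_mat W \<in> carrier_mat n n" and T2: "transpose_mat P \<in> carrier_mat n n" using W P by auto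
  have PD: "P * D \<in> carrier_mat n n" using P D by simp
  have X: "P * D * transpose_mat P \<in> carrier_mat n n" using PD T2 by simp
  have Yc: "transpose_mat P * transpose_mat W \<in> carrier_mat n n" using T1 T2 by simp
  have e1: "W * (P*D*transpose_mat P) * transpose_mat W = W * (P*D*transpose_mat P * transpose_mat W)"
    by (rule assoc_mult_mat[OF W X T1])
  have e2: "P*D*transpose_mat P * transpose_mat W = (P*D) * (transpose_mat P * transpose_mat W)"
    by (rule assoc_mult_mat[OF PD T2 T1])
  have e3: "W * ((P*D) * (transpose_mat P * transpose_mat W)) = (W*(P*D)) * (transpose_mat P * transpose_mat W)"
    by (rule assoc_mult_mat[OF W PD Yc, symmetric])
  have e4: "W*(P*D) = W*P*D" by (rule assoc_mult_mat[OF W P D, symmetric])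
  have e5: "transpose_mat P * transpose_mat W = transpose_mat (W*P)" by (rule transpose_mult[OF W P, symmetric])
  have "W * (P*D*transpose_mat P) * transpose_mat W = W * (P*D*transpose_mat P * transpose_mat W)" by (rule e1)
  also have "\<dots> = W * ((P*D) * (transpose_mat P * transpose_mat W))" unfolding e2 ..
  also have "\<dots> = (W*(P*D)) * (transpose_mat P * transpose_mat W)" by (rule e3)
  also have "\<dots> = (W*P*D) * (transpose_mat P * transpose_mat W)" unfolding e4 ..
  also have "\<dots> = (W*P*D) * transpose_mat (W*P)" unfolding e5 ..
  finally show ?thesis .
qed

lemma orth_comp:
  fixes W P :: "'a::comm_ring_1 mat"
  assumes W: "W \<in> carrier_mat n n" and P: "P \<in> carrier_mat n n"
    and Wo: "transpose_mat W * W = 1\<^sub>m n" and Po: "transpose_mat P * P = 1\<^sub>m n"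
  shows "transpose_mat (W * P) * (W * P) = 1\<^sub>m n"
proof -
  have T: "transpose_mat W \<in> carrier_mat n n" "transpose_mat P \<in> carrier_mat n n" using W P by auto
  have "transpose_mat (W * P) * (W * P) = (transpose_mat P * transpose_mat W) * (W * P)"
    using transpose_mult[OF W P] by simp
  also have "\<dots> = transpose_mat P * (transpose_mat W * (W * P))"
    using assoc_mult_mat[OF T(2) T(1), of "W * P" n] W P by simp
  also have "transpose_mat W * (W * P) = (transpose_mat W * W) * P"
    using assoc_mult_mat[OF T(1) W P] by simp
  also have "\<dots> = P" unfolding Wo using P by simp
  finally show ?thesis using Po by simp
qed

lemma spectral:
  fixes A :: "real mat"
  assumes "A \<in> carrier_mat n n" "transpose_mat A = A" "char_poly A = (\<Prod>x\<leftarrow>es. [:- x, 1:])"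
  shows "\<exists>Q. Q \<in> carrier_mat n n \<and> transpose_mat Q * Q = 1\<^sub>m n \<and> Q * transpose_mat Q = 1\<^sub>m n \<and>
     A = Q * dg n (\<lambda>i. es ! i) * transpose_mat Q"
  using assms
proof (induction es arbitrary: n A)
  case Nil
  have "degree (char_poly A) = n" using degree_monic_char_poly[OF Nil(1)] by blast
  then have n: "n = 0" using Nil(3) by simp
  show ?case
    by (rule exI[of _ "1\<^sub>m n"]) (use Nil(1) n in \<open>auto intro!: eq_matI\<close>)
next
  case (Cons e es)
  note A = Cons(2) and sym = Cons(3) and cp = Cons(4)
  have dn: "degree (char_poly A) = n" using degree_monic_char_poly[OF A] by blast
  have "degree (\<Prod>x\<leftarrow>e # es. [:- x, 1:]) = length (e # es)"
    by (rule degree_linear_factors)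
  then have "n = Suc (length es)" using dn cp by simp
  then obtain m where n: "n = Suc m" by blast
  have A': "A \<in> carrier_mat (Suc m) (Suc m)" using A n by simp
  have cp': "char_poly A = [:- e, 1:] * (\<Prod>x\<leftarrow>es. [:- x, 1:])" using cp by (simp only: list.map prod_list.Cons)
  have "poly (char_poly A) e = 0" unfolding cp' by simp
  then have ev: "eigenvalue A e" using eigenvalue_root_char_poly[OF A] by simp
  from deflate[OF A' sym ev] obtain W A3 where W: "W \<in> carrier_mat (Suc m) (Suc m)"
    and Wo: "transpose_mat W * W = 1\<^sub>m (Suc m)" "W * transpose_mat W = 1\<^sub>m (Suc m)"
    and A3: "A3 \<in> carrier_mat m m" and A3s: "transpose_mat A3 = A3"
    and AF: "A = W * four_block_mat (mat 1 1 (\<lambda>_. e)) (0\<^sub>m 1 m) (0\<^sub>m m 1) A3 * transpose_mat W"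
    by blast
  define F where "F = four_block_mat (mat 1 1 (\<lambda>_. e)) (0\<^sub>m 1 m) (0\<^sub>m m 1) A3"
  have Fc: "F \<in> carrier_mat (Suc m) (Suc m)" unfolding F_def using A3 by auto
  have "char_poly A = char_poly F"
    by (rule sim_char[OF A' Fc W _ Wo(2) Wo(1)]) (use W AF F_def in auto)
  also have "char_poly F = char_poly (mat 1 1 (\<lambda>_. e)) * char_poly A3"
    unfolding F_def by (rule char_poly_four_block_zeros_col) (use A3 in auto)
  also have "char_poly (mat 1 1 (\<lambda>_. e)) = [:- e, 1:]"
    by (simp add: char_poly_defs det_def sign_def)
  finally have "[:- e, 1:] * char_poly A3 = [:- e, 1:] * (\<Prod>x\<leftarrow>es. [:- x, 1:])" using cp' by simp
  then have cp3: "char_poly A3 = (\<Prod>x\<leftarrow>es. [:- x, 1:])"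
    by (metis mult_cancel_left pCons_eq_0_iff zero_neq_one)
  from Cons(1)[OF A3 A3s cp3] obtain Q3 where Q3: "Q3 \<in> carrier_mat m m"
    and Q3o: "transpose_mat Q3 * Q3 = 1\<^sub>m m" "Q3 * transpose_mat Q3 = 1\<^sub>m m"
    and A3Q: "A3 = Q3 * dg m (\<lambda>i. es ! i) * transpose_mat Q3" by blast
  define P where "P = four_block_mat (1\<^sub>m 1) (0\<^sub>m 1 m) (0\<^sub>m m 1) Q3"
  have Pc: "P \<in> carrier_mat (Suc m) (Suc m)" unfolding P_def using Q3 by auto
  have PT: "transpose_mat P = four_block_mat (1\<^sub>m 1) (0\<^sub>m 1 m) (0\<^sub>m m 1) (transpose_mat Q3)"
    unfolding P_def using Q3 by (subst transpose_four_block_mat) auto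
  have Po: "transpose_mat P * P = 1\<^sub>m (Suc m)"
    unfolding PT unfolding P_def
    by (subst mult_four_block_mat) (use Q3 Q3o in auto)
  define D3 where "D3 = dg m (\<lambda>i. es ! i)"
  have D: "dg (Suc m) (\<lambda>i. (e # es) ! i) = four_block_mat (mat 1 1 (\<lambda>_. e)) (0\<^sub>m 1 m) (0\<^sub>m m 1) D3"
    by (rule eq_matI) (auto simp: dg_def D3_def)
  have PD: "P * dg (Suc m) (\<lambda>i. (e # es) ! i) = four_block_mat (mat 1 1 (\<lambda>_. e)) (0\<^sub>m 1 m) (0\<^sub>m m 1) (Q3 * D3)"
    unfolding D P_def by (subst mult_four_block_mat) (use Q3 in \<open>auto simp: D3_def left_mult_zero_mat right_mult_zero_mat\<close>)
  have PDP: "P * dg (Suc m) (\<lambda>i. (e # es) ! i) * transpose_mat P = F"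
    unfolding PD PT F_def A3Q
    by (subst mult_four_block_mat) (use Q3 in \<open>auto simp: D3_def left_mult_zero_mat right_mult_zero_mat\<close>)
  define Q where "Q = W * P"
  have Qc: "Q \<in> carrier_mat n n" unfolding Q_def using W Pc n by simp
  have Qo: "transpose_mat Q * Q = 1\<^sub>m n" unfolding Q_def n by (rule orth_comp[OF W Pc Wo(1) Po])
  have Qo2: "Q * transpose_mat Q = 1\<^sub>m n"
    using mat_mult_left_right_inverse[OF _ Qc Qo] Qc by auto
  have "A = W * (P * dg (Suc m) (\<lambda>i. (e # es) ! i) * transpose_mat P) * transpose_mat W"
    unfolding PDP AF F_def ..
  also have "\<dots> = Q * dg n (\<lambda>i. (e # es) ! i) * transpose_mat Q"
    unfolding Q_def n by (rule conj_comp[OF W Pc dg_carrier])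
  finally show ?case using Qc Qo Qo2 by blast
qed




lemma dg_mult_vec: "y \<in> carrier_vec n \<Longrightarrow> dg n f *\<^sub>v y = vec n (\<lambda>i. f i * y $ i)"
proof (rule eq_vecI)
  fix i assume y: "y \<in> carrier_vec n" and i: "i < dim_vec (vec n (\<lambda>i. f i * y $ i))"
  then have i: "i < n" by simp
  have "(dg n f *\<^sub>v y) $ i = (\<Sum>j = 0..<n. (if i = j then f i else 0) * y $ j)"
    using i y by (simp add: dg_def scalar_prod_def row_def)
  also have "\<dots> = (\<Sum>j = 0..<n. if i = j then f i * y $ j else 0)"
    by (rule sum.cong) auto
  also have "\<dots> = f i * y $ i" using i by (simp add: sum.delta)
  finally show "(dg n f *\<^sub>v y) $ i = vec n (\<lambda>i. f i * y $ i) $ i" using i by simp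
qed (auto simp: dg_def)

lemma dg_transpose[simp]: "transpose_mat (dg n f) = dg n f"
  by (rule eq_matI) (auto simp: dg_def)

lemma sprod_self: "(x :: real vec) \<in> carrier_vec n \<Longrightarrow> x \<bullet> x = (\<Sum>i = 0..<n. (x $ i)^2)"
  unfolding scalar_prod_def by (intro sum.cong) (auto simp: power2_eq_square)

lemma orth_sprod:
  fixes Q :: "real mat"
  assumes Q: "Q \<in> carrier_mat n n" and x: "x \<in> carrier_vec n" and y: "y \<in> carrier_vec n"
  shows "(Q *\<^sub>v x) \<bullet> y = x \<bullet> (transpose_mat Q *\<^sub>v y)"
  using transpose_vec_mult_scalar[of "transpose_mat Q" n n y x] Q x y by simp

lemma inv_cancel_vec:
  fixes Q T :: "real mat"
  assumes T: "T \<in> carrier_mat n n" and Q: "Q \<in> carrier_mat n n" and TQ: "T * Q = 1\<^sub>m n"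
    and y: "y \<in> carrier_vec n"
  shows "T *\<^sub>v (Q *\<^sub>v y) = y"
proof -
  have "T *\<^sub>v (Q *\<^sub>v y) = (T * Q) *\<^sub>v y" by (rule assoc_mult_mat_vec[OF T Q y, symmetric])
  also have "\<dots> = y" unfolding TQ using y by simp
  finally show ?thesis .
qed

lemma qf_diag:
  fixes Q A :: "real mat"
  assumes Q: "Q \<in> carrier_mat n n" and Qo: "transpose_mat Q * Q = 1\<^sub>m n"
    and AQ: "A = Q * dg n f * transpose_mat Q" and y: "y \<in> carrier_vec n"
  shows "(Q *\<^sub>v y) \<bullet> (A *\<^sub>v (Q *\<^sub>v y)) = (\<Sum>i = 0..<n. f i * (y $ i)^2)"
    and "(Q *\<^sub>v y) \<bullet> (Q *\<^sub>v y) = (\<Sum>i = 0..<n. (y $ i)^2)"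
proof -
  have T: "transpose_mat Q \<in> carrier_mat n n" using Q by simp
  have D: "dg n f \<in> carrier_mat n n" by simp
  have QD: "Q * dg n f \<in> carrier_mat n n" using Q D by (rule mult_carrier_mat)
  have Qy: "Q *\<^sub>v y \<in> carrier_vec n" using Q y by (rule mult_mat_vec_carrier)
  have Dy: "dg n f *\<^sub>v y \<in> carrier_vec n" using D y by (rule mult_mat_vec_carrier)
  have TQy: "transpose_mat Q *\<^sub>v (Q *\<^sub>v y) \<in> carrier_vec n" using T Qy by (rule mult_mat_vec_carrier)
  have QDy: "Q *\<^sub>v (dg n f *\<^sub>v y) \<in> carrier_vec n" using Q Dy by (rule mult_mat_vec_carrier)
  have QQy: "transpose_mat Q *\<^sub>v (Q *\<^sub>v y) = y"
    by (rule inv_cancel_vec[OF T Q Qo y])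
  have "A *\<^sub>v (Q *\<^sub>v y) = (Q * dg n f) *\<^sub>v (transpose_mat Q *\<^sub>v (Q *\<^sub>v y))"
    unfolding AQ by (rule assoc_mult_mat_vec[OF QD T Qy])
  also have "\<dots> = Q *\<^sub>v (dg n f *\<^sub>v y)" unfolding QQy
    by (rule assoc_mult_mat_vec[OF Q D y])
  finally have Ay: "A *\<^sub>v (Q *\<^sub>v y) = Q *\<^sub>v (dg n f *\<^sub>v y)" .
  have "(Q *\<^sub>v y) \<bullet> (A *\<^sub>v (Q *\<^sub>v y)) = y \<bullet> (transpose_mat Q *\<^sub>v (Q *\<^sub>v (dg n f *\<^sub>v y)))"
    unfolding Ay by (rule orth_sprod[OF Q y QDy])
  also have "transpose_mat Q *\<^sub>v (Q *\<^sub>v (dg n f *\<^sub>v y)) = dg n f *\<^sub>v y"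
    by (rule inv_cancel_vec[OF T Q Qo Dy])
  also have "y \<bullet> (dg n f *\<^sub>v y) = (\<Sum>i = 0..<n. f i * (y $ i)^2)"
  proof -
    have "y \<bullet> (dg n f *\<^sub>v y) = (\<Sum>i = 0..<n. y $ i * (f i * y $ i))"
      unfolding dg_mult_vec[OF y] scalar_prod_def by simp
    also have "\<dots> = (\<Sum>i = 0..<n. f i * (y $ i)^2)"
      by (rule sum.cong[OF refl]) (simp add: power2_eq_square)
    finally show ?thesis .
  qed
  finally show "(Q *\<^sub>v y) \<bullet> (A *\<^sub>v (Q *\<^sub>v y)) = (\<Sum>i = 0..<n. f i * (y $ i)^2)" .
  have "(Q *\<^sub>v y) \<bullet> (Q *\<^sub>v y) = y \<bullet> (transpose_mat Q *\<^sub>v (Q *\<^sub>v y))"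
    by (rule orth_sprod[OF Q y Qy])
  also have "\<dots> = (\<Sum>i = 0..<n. (y $ i)^2)" unfolding QQy by (rule sprod_self[OF y])
  finally show "(Q *\<^sub>v y) \<bullet> (Q *\<^sub>v y) = (\<Sum>i = 0..<n. (y $ i)^2)" .
qed

lemma nonzero_vec_ex: "c \<in> carrier_vec m \<Longrightarrow> c \<noteq> 0\<^sub>v m \<Longrightarrow> \<exists>j<m. c $ j \<noteq> 0"
  by (metis carrier_vecD eq_vecI index_zero_vec(1) index_zero_vec(2))

definition negsp :: "real mat \<Rightarrow> real \<Rightarrow> real mat \<Rightarrow> nat \<Rightarrow> bool" where
  "negsp A t U m \<longleftrightarrow> (\<forall>c \<in> carrier_vec m. c \<noteq> 0\<^sub>v m \<longrightarrow>
      (U *\<^sub>v c) \<bullet> (A *\<^sub>v (U *\<^sub>v c)) < t * ((U *\<^sub>v c) \<bullet> (U *\<^sub>v c)))"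

lemma sc_lt:
  fixes Q A :: "real mat"
  assumes Q: "Q \<in> carrier_mat n n" and Qo: "transpose_mat Q * Q = 1\<^sub>m n"
    and AQ: "A = Q * dg n (\<lambda>i. ls ! i) * transpose_mat Q"
    and srt: "sorted ls" and len: "length ls = n" and k: "k < n" and lt: "ls ! k < t"
  shows "\<exists>U \<in> carrier_mat n (Suc k). negsp A t U (Suc k)"
proof -
  define U where "U = mat n (Suc k) (\<lambda>(r,j). Q $$ (r,j))"
  have Uc: "U \<in> carrier_mat n (Suc k)" unfolding U_def by simp
  have "negsp A t U (Suc k)" unfolding negsp_def
  proof (intro ballI impI)
    fix c :: "real vec" assume c: "c \<in> carrier_vec (Suc k)" and c0: "c \<noteq> 0\<^sub>v (Suc k)"
    define y where "y = vec n (\<lambda>i. if i < Suc k then c $ i else 0)"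
    have y: "y \<in> carrier_vec n" unfolding y_def by simp
    have Uy: "U *\<^sub>v c = Q *\<^sub>v y"
    proof (rule eq_vecI)
      fix r assume "r < dim_vec (Q *\<^sub>v y)"
      then have r: "r < n" using Q by simp
      have "(Q *\<^sub>v y) $ r = (\<Sum>i = 0..<n. Q $$ (r, i) * y $ i)"
        using r Q y by (simp add: scalar_prod_def row_def)
      also have "\<dots> = (\<Sum>i = 0..<Suc k. Q $$ (r, i) * c $ i)"
        by (rule sum.mono_neutral_cong_right) (use k in \<open>auto simp: y_def\<close>)
      also have "\<dots> = (U *\<^sub>v c) $ r"
        using r c by (simp add: U_def scalar_prod_def row_def)
      finally show "(U *\<^sub>v c) $ r = (Q *\<^sub>v y) $ r" by simp
    qed (use Q Uc in auto)
    obtain j where j: "j < Suc k" "c $ j \<noteq> 0" using nonzero_vec_ex[OF c c0] by blast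
    have "t * (\<Sum>i = 0..<n. (y $ i)^2) - (\<Sum>i = 0..<n. ls ! i * (y $ i)^2)
        = (\<Sum>i = 0..<n. (t - ls ! i) * (y $ i)^2)"
      by (simp add: sum_distrib_left sum_subtractf algebra_simps)
    also have "\<dots> > 0"
    proof (rule sum_pos2[of _ j])
      show "j \<in> {0..<n}" using j k by simp
      have "ls ! j \<le> ls ! k" using srt j k len by (simp add: sorted_nth_mono)
      then show "0 < (t - ls ! j) * (y $ j)^2" using j lt k by (simp add: y_def)
      show "\<And>i. i \<in> {0..<n} \<Longrightarrow> 0 \<le> (t - ls ! i) * (y $ i)^2"
      proof -
        fix i assume i: "i \<in> {0..<n}"
        show "0 \<le> (t - ls ! i) * (y $ i)^2"
        proof (cases "i < Suc k")
          case True
          then have "ls ! i \<le> ls ! k" using srt k len by (simp add: sorted_nth_mono)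
          then show ?thesis using lt by simp
        next
          case False
          then show ?thesis using i by (simp add: y_def)
        qed
      qed
    qed simp
    finally have "(\<Sum>i = 0..<n. ls ! i * (y $ i)^2) < t * (\<Sum>i = 0..<n. (y $ i)^2)" by simp
    then show "(U *\<^sub>v c) \<bullet> (A *\<^sub>v (U *\<^sub>v c)) < t * ((U *\<^sub>v c) \<bullet> (U *\<^sub>v c))"
      unfolding Uy qf_diag[OF Q Qo AQ y] .
  qed
  then show ?thesis using Uc by blast
qed

lemma sc_ge:
  fixes Q A U :: "real mat"
  assumes Q: "Q \<in> carrier_mat n n" and Qo: "transpose_mat Q * Q = 1\<^sub>m n" and Qo2: "Q * transpose_mat Q = 1\<^sub>m n"
    and AQ: "A = Q * dg n (\<lambda>i. ls ! i) * transpose_mat Q"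
    and srt: "sorted ls" and len: "length ls = n" and k: "k < n"
    and Uc: "U \<in> carrier_mat n (Suc k)" and neg: "negsp A t U (Suc k)"
  shows "ls ! k < t"
proof (rule ccontr)
  assume "\<not> ls ! k < t"
  then have tk: "t \<le> ls ! k" by simp
  have T: "transpose_mat Q \<in> carrier_mat n n" using Q by simp
  define G where "G = transpose_mat Q * U"
  have Gc: "G \<in> carrier_mat n (Suc k)" unfolding G_def using T Uc by simp
  define E0 where "E0 = mat (Suc k) (Suc k) (\<lambda>(i,j). G $$ (i,j))"
  define E where "E = multrow k 0 E0"
  have E0c: "E0 \<in> carrier_mat (Suc k) (Suc k)" unfolding E0_def by simp
  have Ec: "E \<in> carrier_mat (Suc k) (Suc k)" unfolding E_def using E0c by simp
  have "det E = 0 * det E0" unfolding E_def by (rule det_multrow[OF _ E0c]) simp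
  then have "det E = 0" by simp
  then obtain c where c: "c \<in> carrier_vec (Suc k)" "c \<noteq> 0\<^sub>v (Suc k)" and Ec0: "E *\<^sub>v c = 0\<^sub>v (Suc k)"
    using det_0_iff_vec_prod_zero[OF Ec] by blast
  define x where "x = U *\<^sub>v c"
  have x: "x \<in> carrier_vec n" unfolding x_def using Uc c by simp
  define y where "y = transpose_mat Q *\<^sub>v x"
  have y: "y \<in> carrier_vec n" unfolding y_def using T x by simp
  have yG: "y = G *\<^sub>v c" unfolding y_def x_def G_def
    by (rule assoc_mult_mat_vec[symmetric, OF T Uc c(1)])
  have y0: "\<And>i. i < k \<Longrightarrow> y $ i = 0"
  proof -
    fix i assume i: "i < k"
    have "(E *\<^sub>v c) $ i = 0" using Ec0 i by simp
    moreover have "(E *\<^sub>v c) $ i = (G *\<^sub>v c) $ i"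
      using i k Gc c(1) by (simp add: E_def E0_def mat_multrow_gen_def scalar_prod_def row_def)
    ultimately show "y $ i = 0" unfolding yG by simp
  qed
  have xQ: "x = Q *\<^sub>v y" unfolding y_def
    using inv_cancel_vec[OF Q T Qo2 x] by simp
  have "t * (\<Sum>i = 0..<n. (y $ i)^2) = (\<Sum>i = 0..<n. t * (y $ i)^2)" by (simp add: sum_distrib_left)
  also have "\<dots> \<le> (\<Sum>i = 0..<n. ls ! i * (y $ i)^2)"
  proof (rule sum_mono)
    fix i assume i: "i \<in> {0..<n}"
    show "t * (y $ i)^2 \<le> ls ! i * (y $ i)^2"
    proof (cases "i < k")
      case True then show ?thesis using y0 by simp
    next
      case False
      then have "ls ! k \<le> ls ! i" using srt i len by (simp add: sorted_nth_mono)
      then show ?thesis using tk by (simp add: mult_right_mono)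
    qed
  qed
  finally have "t * (x \<bullet> x) \<le> x \<bullet> (A *\<^sub>v x)"
    unfolding xQ qf_diag[OF Q Qo AQ y] .
  moreover have "x \<bullet> (A *\<^sub>v x) < t * (x \<bullet> x)" using neg c unfolding negsp_def x_def by blast
  ultimately show False by simp
qed

lemma transport:
  fixes A U :: "real mat"
  assumes A: "A \<in> carrier_mat n n" and U: "U \<in> carrier_mat n m"
    and ab: "\<And>i. i < n \<Longrightarrow> a \<le> (d i)^2 \<and> (d i)^2 \<le> b"
    and neg: "negsp A t (dg n d * U) m"
  shows "negsp (dg n d * A * dg n d) (if t \<ge> 0 then b * t else a * t) U m"
  unfolding negsp_def
proof (intro ballI impI)
  fix c :: "real vec" assume c: "c \<in> carrier_vec m" and c0: "c \<noteq> 0\<^sub>v m"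
  define N where "N = dg n d"
  have N: "N \<in> carrier_mat n n" unfolding N_def by simp
  define x where "x = U *\<^sub>v c"
  have x: "x \<in> carrier_vec n" unfolding x_def using U c by simp
  define z where "z = N *\<^sub>v x"
  have z: "z \<in> carrier_vec n" unfolding z_def using N x by simp
  have zz: "(N * U) *\<^sub>v c = z" unfolding z_def x_def by (rule assoc_mult_mat_vec[OF N U c])
  have NA: "N * A \<in> carrier_mat n n" using N A by simp
  have "(N * A * N) *\<^sub>v x = (N * A) *\<^sub>v z" unfolding z_def by (rule assoc_mult_mat_vec[OF NA N x])
  also have "\<dots> = N *\<^sub>v (A *\<^sub>v z)" by (rule assoc_mult_mat_vec[OF N A z])
  finally have "(N * A * N) *\<^sub>v x = N *\<^sub>v (A *\<^sub>v z)" .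
  then have "x \<bullet> ((N * A * N) *\<^sub>v x) = z \<bullet> (A *\<^sub>v z)"
    using orth_sprod[OF N x, of "A *\<^sub>v z"] A z unfolding z_def N_def by simp
  also have "\<dots> < t * (z \<bullet> z)" using neg c c0 zz unfolding negsp_def N_def by blast
  finally have lt: "x \<bullet> ((N * A * N) *\<^sub>v x) < t * (z \<bullet> z)" .
  have zi: "\<And>i. i < n \<Longrightarrow> z $ i = d i * x $ i" unfolding z_def N_def dg_mult_vec[OF x] by simp
  have zzs: "z \<bullet> z = (\<Sum>i = 0..<n. (d i)^2 * (x $ i)^2)"
    unfolding sprod_self[OF z] by (rule sum.cong) (auto simp: zi power_mult_distrib)
  have lo: "a * (x \<bullet> x) \<le> z \<bullet> z"
    unfolding zzs sprod_self[OF x] sum_distrib_left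
  proof (rule sum_mono)
    fix i assume i: "i \<in> {0..<n}"
    have "a \<le> (d i)^2" using ab[of i] i by simp
    then show "a * (x $ i)^2 \<le> (d i)^2 * (x $ i)^2" by (rule mult_right_mono) simp
  qed
  have hi: "z \<bullet> z \<le> b * (x \<bullet> x)"
    unfolding zzs sprod_self[OF x] sum_distrib_left
  proof (rule sum_mono)
    fix i assume i: "i \<in> {0..<n}"
    have "(d i)^2 \<le> b" using ab[of i] i by simp
    then show "(d i)^2 * (x $ i)^2 \<le> b * (x $ i)^2" by (rule mult_right_mono) simp
  qed
  have le: "t * (z \<bullet> z) \<le> (if t \<ge> 0 then b * t else a * t) * (x \<bullet> x)"
  proof (cases "t \<ge> 0")
    case True
    have e: "(if t \<ge> 0 then b * t else a * t) * (x \<bullet> x) = t * (b * (x \<bullet> x))"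
      using True by simp
    show ?thesis unfolding e by (rule mult_left_mono[OF hi True])
  next
    case False
    have e: "(if t \<ge> 0 then b * t else a * t) * (x \<bullet> x) = t * (a * (x \<bullet> x))"
      using False by simp
    show ?thesis unfolding e by (rule mult_left_mono_neg[OF lo]) (use False in simp)
  qed
  from lt le have "x \<bullet> ((N * A * N) *\<^sub>v x) < (if t \<ge> 0 then b * t else a * t) * (x \<bullet> x)"
    by (rule less_le_trans)
  then show "(U *\<^sub>v c) \<bullet> ((dg n d * A * dg n d) *\<^sub>v (U *\<^sub>v c)) < (if t \<ge> 0 then b * t else a * t) * ((U *\<^sub>v c) \<bullet> (U *\<^sub>v c))"
    unfolding x_def N_def .
qed




lemma final_arith:
  fixes l u a b :: real
  assumes a: "0 < a" and ab: "a \<le> b"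
    and H1: "\<And>t. l < t \<Longrightarrow> u < (if 0 \<le> t then b * t else a * t)"
    and H2: "\<And>t. u < t \<Longrightarrow> l < (if 0 \<le> t then (1/a) * t else (1/b) * t)"
  shows "\<exists>\<theta>. a \<le> \<theta> \<and> \<theta> \<le> b \<and> u = \<theta> * l"
proof -
  have b: "0 < b" using a ab by simp
  consider "l > 0" | "l = 0" | "l < 0" by linarith
  then show ?thesis
  proof cases
    case 1
    have u1: "u \<le> b * l"
    proof (rule ccontr)
      assume "\<not> u \<le> b * l"
      then have h: "u > b * l" by simp
      define t where "t = (l + u / b) / 2"
      have "u / b > l" using h b by (simp add: field_simps)
      moreover have "\<And>w. l < w \<Longrightarrow> l < (l + w) / 2" by (simp add: field_simps)
      moreover have "\<And>w. l < w \<Longrightarrow> 0 < l \<Longrightarrow> 0 \<le> (l + w) / 2" by (simp add: field_simps)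
      ultimately have tl: "t > l \<and> t \<ge> 0" using 1 unfolding t_def by blast
      then have tl: "t > l" "t \<ge> 0" by auto
      have "u < b * t" using H1[OF tl(1)] tl(2) by simp
      also have "b * t = (b * l + u) / 2" unfolding t_def using b by (simp add: field_simps)
      finally show False using h by (simp add: field_simps)
    qed
    have u0: "u \<ge> 0"
    proof (rule ccontr)
      assume "\<not> u \<ge> 0"
      then have h: "u < 0" by simp
      have "u < u / 2" using h by simp
      from H2[OF this] have "l < (1/b) * (u / 2)" using h by simp
      moreover have "(1/b) * (u / 2) < 0" using h b by (simp add: divide_neg_pos mult_pos_neg)
      ultimately show False using 1 by linarith
    qed
    have u2: "a * l \<le> u"
    proof (rule ccontr)
      assume "\<not> a * l \<le> u"
      then have h: "u < a * l" by simp
      define t where "t = (u + a * l) / 2"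
      have tu: "u < t" "t \<ge> 0" unfolding t_def using h u0 1 a by (simp_all add: field_simps)
      have "l < (1/a) * t" using H2[OF tu(1)] tu(2) by simp
      also have "(1/a) * t = (u / a + l) / 2" unfolding t_def using a by (simp add: field_simps)
      also have "u / a < l" using h a by (simp add: field_simps)
      finally show False by (simp add: field_simps)
    qed
    show ?thesis
      by (rule exI[of _ "u / l"]) (use 1 u1 u2 in \<open>auto simp: field_simps\<close>)
  next
    case 2
    have "u \<le> 0"
    proof (rule ccontr)
      assume "\<not> u \<le> 0"
      then have h: "u > 0" by simp
      define t where "t = u / (2 * b)"
      have tl: "l < t" "0 \<le> t" unfolding t_def using h b 2 by simp_all
      have "u < b * t" using H1[OF tl(1)] tl(2) by simp
      also have "b * t = u / 2" unfolding t_def using b by simp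
      finally show False using h by simp
    qed
    moreover have "u \<ge> 0"
    proof (rule ccontr)
      assume "\<not> u \<ge> 0"
      then have h: "u < 0" by simp
      have "u < u / 2" using h by simp
      from H2[OF this] have "l < (1/b) * (u / 2)" using h by simp
      moreover have "(1/b) * (u / 2) < 0" using h b by (simp add: divide_neg_pos mult_pos_neg)
      ultimately show False using 2 by linarith
    qed
    ultimately show ?thesis using 2 a ab by (intro exI[of _ a]) simp
  next
    case 3
    have u1: "u \<le> a * l"
    proof (rule ccontr)
      assume "\<not> u \<le> a * l"
      then have h: "u > a * l" by simp
      define u' where "u' = min u 0"
      have u'1: "u' > a * l" unfolding u'_def using h 3 a by (simp add: mult_pos_neg)
      define t where "t = (l + u' / a) / 2"
      have "u' / a > l" using u'1 a by (simp add: field_simps)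
      moreover have "u' / a \<le> 0" unfolding u'_def using a by (simp add: divide_nonpos_pos)
      moreover have "\<And>w. l < w \<Longrightarrow> l < (l + w) / 2" by (simp add: field_simps)
      moreover have "\<And>w. w \<le> 0 \<Longrightarrow> (l + w) / 2 < 0" using 3 by (simp add: field_simps)
      ultimately have tl: "t > l \<and> t < 0" unfolding t_def by blast
      then have tl: "t > l" "t < 0" by auto
      have "u < a * t" using H1[OF tl(1)] tl(2) by simp
      also have "a * t = (a * l + u') / 2" unfolding t_def using a by (simp add: field_simps)
      finally have "u < (a * l + u') / 2" .
      then have "2 * u < a * l + u'" by (simp add: field_simps)
      moreover have "u' \<le> u" unfolding u'_def by simp
      ultimately show False using u'1 by linarith
    qed
    have uneg: "u < 0" using u1 3 a by (smt (verit) mult_pos_neg)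
    have u2: "b * l \<le> u"
    proof (rule ccontr)
      assume "\<not> b * l \<le> u"
      then have h: "u < b * l" by simp
      define t where "t = (u + b * l) / 2"
      have blneg: "b * l < 0" using b 3 by (simp add: mult_pos_neg)
      have tu: "u < t" "t < 0" unfolding t_def using h blneg by simp_all
      have "l < (1/b) * t" using H2[OF tu(1)] tu(2) by simp
      also have "(1/b) * t = (u / b + l) / 2" unfolding t_def using b by (simp add: field_simps)
      also have "u / b < l" using h b by (simp add: field_simps)
      finally show False by (simp add: field_simps)
    qed
    have "a \<le> u / l" using u1 3 by (simp add: field_simps)
    moreover have "u / l \<le> b" using u2 3 by (simp add: field_simps)
    moreover have "u = (u / l) * l" using 3 by simp
    ultimately show ?thesis by blast
  qed
qed




lemma dg_index[simp]: "i < n \<Longrightarrow> j < n \<Longrightarrow> dg n f $$ (i,j) = (if i = j then f i else 0)"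
  unfolding dg_def by simp

lemma dg_mult_left:
  assumes X: "X \<in> carrier_mat n m" and i: "i < n" and j: "j < m"
  shows "(dg n f * X) $$ (i,j) = f i * X $$ (i,j)"
proof -
  have "(dg n f * X) $$ (i,j) = (\<Sum>k = 0..<n. (if i = k then f i else 0) * X $$ (k, j))"
    using X i j by (simp add: dg_def scalar_prod_def row_def col_def)
  also have "\<dots> = (\<Sum>k = 0..<n. if i = k then f i * X $$ (k, j) else 0)"
    by (rule sum.cong) auto
  also have "\<dots> = f i * X $$ (i,j)" using i by (simp add: sum.delta)
  finally show ?thesis .
qed

lemma dg_mult_right:
  assumes X: "X \<in> carrier_mat m n" and i: "i < m" and j: "j < n"
  shows "(X * dg n f) $$ (i,j) = X $$ (i,j) * f j"
proof -
  have "(X * dg n f) $$ (i,j) = (\<Sum>k = 0..<n. X $$ (i, k) * (if k = j then f k else 0))"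
    using X i j by (simp add: dg_def scalar_prod_def row_def col_def)
  also have "\<dots> = (\<Sum>k = 0..<n. if j = k then X $$ (i, k) * f k else 0)"
    by (rule sum.cong) auto
  also have "\<dots> = X $$ (i,j) * f j" using j by (simp add: sum.delta)
  finally show ?thesis .
qed

lemma dg_mult_left_sq[simp]:
  "X \<in> carrier_mat n n \<Longrightarrow> i < n \<Longrightarrow> j < n \<Longrightarrow> (dg n f * X) $$ (i,j) = f i * X $$ (i,j)"
  by (rule dg_mult_left)

lemma dg_mult_right_sq[simp]:
  "X \<in> carrier_mat n n \<Longrightarrow> i < n \<Longrightarrow> j < n \<Longrightarrow> (X * dg n f) $$ (i,j) = X $$ (i,j) * f j"
  by (rule dg_mult_right)

lemma dg_cancel_left:
  assumes fg: "\<And>i. i < n \<Longrightarrow> f i * g i = 1" and U: "U \<in> carrier_mat n m"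
  shows "dg n f * (dg n g * U) = U"
proof (rule eq_matI)
  fix i j assume i: "i < dim_row U" and j: "j < dim_col U"
  then have i: "i < n" and j: "j < m" using U by auto
  have GU: "dg n g * U \<in> carrier_mat n m" by (rule mult_carrier_mat[OF dg_carrier U])
  show "(dg n f * (dg n g * U)) $$ (i, j) = U $$ (i, j)"
    unfolding dg_mult_left[OF GU i j] dg_mult_left[OF U i j] using fg[OF i]
    by (simp add: mult.assoc[symmetric])
qed (use U in auto)

lemma sym_arith:
  fixes x y bij bji :: real
  assumes "x > 0" "y > 0" "y^2 * bji = x^2 * bij"
  shows "y * bji * (1 / x) = x * bij * (1 / y)"
  using assms by (simp add: field_simps power2_eq_square)

lemma eig_cong: "char_poly X = char_poly Y \<Longrightarrow> sorted_eigenvalues X = sorted_eigenvalues Y"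
  unfolding sorted_eigenvalues_def by (simp only:)

lemma sym_spectral:
  fixes A :: "real mat"
  assumes A: "A \<in> carrier_mat n n" and sym: "transpose_mat A = A"
  shows "\<exists>Q ls. Q \<in> carrier_mat n n \<and> transpose_mat Q * Q = 1\<^sub>m n \<and> Q * transpose_mat Q = 1\<^sub>m n
    \<and> A = Q * dg n (\<lambda>i. ls ! i) * transpose_mat Q \<and> sorted ls \<and> length ls = n \<and> sorted_eigenvalues A = ls"
proof -
  obtain es where es: "char_poly A = (\<Prod>x\<leftarrow>es. [:- x, 1:])" using sym_split[OF A sym] by blast
  from sorted_eig_exists[OF es] have cp: "char_poly A = (\<Prod>x\<leftarrow>sort es. [:- x, 1:])"
    and se: "sorted_eigenvalues A = sort es" by auto
  have "degree (\<Prod>x\<leftarrow>sort es. [:- x, 1:]) = length (sort es)" by (rule degree_linear_factors)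
  moreover have "degree (char_poly A) = n" using degree_monic_char_poly[OF A] by blast
  ultimately have len: "length (sort es) = n" using cp by simp
  from spectral[OF A sym cp] obtain Q where "Q \<in> carrier_mat n n \<and> transpose_mat Q * Q = 1\<^sub>m n \<and>
     Q * transpose_mat Q = 1\<^sub>m n \<and> A = Q * dg n (\<lambda>i. sort es ! i) * transpose_mat Q" by blast
  then show ?thesis using len se by (intro exI[of _ Q] exI[of _ "sort es"]) auto
qed

theorem lemma5:
  fixes B S :: "real mat" and n :: nat
  assumes "B \<in> carrier_mat n n"
    and "symmetrizable n B"
    and "pos_diag_mat n S"
  shows "\<forall>k<n. \<exists>\<theta>.
           Min {S $$ (i,i) | i. i < n} \<le> \<theta> \<and> \<theta> \<le> Max {S $$ (i,i) | i. i < n} \<and>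
           sorted_eigenvalues (B * S) ! k = sorted_eigenvalues (S * B) ! k \<and>
           sorted_eigenvalues (S * B) ! k = sorted_eigenvalues (diag_sqrt S * B * diag_sqrt S) ! k \<and>
           sorted_eigenvalues (diag_sqrt S * B * diag_sqrt S) ! k = \<theta> * sorted_eigenvalues B ! k"
proof (intro allI impI)
  fix k assume k: "k < n"
  note index_mult_mat(1)[simp del]
  have Bc: "B \<in> carrier_mat n n" by fact
  from assms(2) obtain D where D: "pos_diag_mat n D" and DB: "transpose_mat (D * B) = D * B"
    unfolding symmetrizable_def by blast
  define dd where "dd i = D $$ (i,i)" for i
  define s where "s i = S $$ (i,i)" for i
  have Dc: "D \<in> carrier_mat n n" and Ddiag: "diagonal_mat D" and dpos: "\<And>i. i < n \<Longrightarrow> dd i > 0"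
    using D unfolding pos_diag_mat_def dd_def by auto
  have Sc: "S \<in> carrier_mat n n" and Sdiag: "diagonal_mat S" and spos: "\<And>i. i < n \<Longrightarrow> s i > 0"
    using assms(3) unfolding pos_diag_mat_def s_def by auto
  have Dd: "D = dg n dd"
    by (rule eq_matI) (use Dc Ddiag in \<open>auto simp: dg_def dd_def diagonal_mat_def\<close>)
  have Sd: "S = dg n s"
    by (rule eq_matI) (use Sc Sdiag in \<open>auto simp: dg_def s_def diagonal_mat_def\<close>)
  define p where "p i = sqrt (dd i)" for i
  define pinv where "pinv i = 1 / sqrt (dd i)" for i
  define m where "m i = sqrt (s i)" for i
  define minv where "minv i = 1 / sqrt (s i)" for i
  have ppos: "\<And>i. i < n \<Longrightarrow> p i > 0" unfolding p_def using dpos by simp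
  have mpos: "\<And>i. i < n \<Longrightarrow> m i > 0" unfolding m_def using spos by simp
  have ppinv: "\<And>i. i < n \<Longrightarrow> pinv i * p i = 1" "\<And>i. i < n \<Longrightarrow> p i * pinv i = 1"
  proof -
    have nz: "\<And>i. i < n \<Longrightarrow> sqrt (dd i) \<noteq> 0" using dpos by (smt (verit) real_sqrt_gt_zero)
    show "\<And>i. i < n \<Longrightarrow> pinv i * p i = 1" "\<And>i. i < n \<Longrightarrow> p i * pinv i = 1"
      unfolding p_def pinv_def using nz by simp_all
  qed
  have mminv: "\<And>i. i < n \<Longrightarrow> minv i * m i = 1" "\<And>i. i < n \<Longrightarrow> m i * minv i = 1"
  proof -
    have nz: "\<And>i. i < n \<Longrightarrow> sqrt (s i) \<noteq> 0" using spos by (smt (verit) real_sqrt_gt_zero)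
    show "\<And>i. i < n \<Longrightarrow> minv i * m i = 1" "\<And>i. i < n \<Longrightarrow> m i * minv i = 1"
      unfolding m_def minv_def using nz by simp_all
  qed
  have mm: "\<And>i. i < n \<Longrightarrow> m i * m i = s i" unfolding m_def using spos by (metis abs_of_pos real_sqrt_mult_self)
  have psq: "\<And>i. i < n \<Longrightarrow> (p i)^2 = dd i" unfolding p_def using dpos by (metis less_imp_le real_sqrt_pow2)
  have sqD: "diag_sqrt S = dg n m"
    unfolding diag_sqrt_def dg_def m_def s_def using Sc by auto
  have symc: "\<And>i j. i < n \<Longrightarrow> j < n \<Longrightarrow> dd j * B $$ (j,i) = dd i * B $$ (i,j)"
  proof -
    fix i j assume i: "i < n" and j: "j < n"
    have "transpose_mat (D * B) $$ (i,j) = (D * B) $$ (i,j)" using DB by simp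
    then have "(D * B) $$ (j,i) = (D * B) $$ (i,j)" using i j Dc Bc by simp
    moreover have "(D * B) $$ (j,i) = dd j * B $$ (j,i)" unfolding Dd by (rule dg_mult_left[OF Bc j i])
    moreover have "(D * B) $$ (i,j) = dd i * B $$ (i,j)" unfolding Dd by (rule dg_mult_left[OF Bc i j])
    ultimately show "dd j * B $$ (j,i) = dd i * B $$ (i,j)" by simp
  qed
  define A where "A = dg n p * B * dg n pinv"
  have Ac: "A \<in> carrier_mat n n" unfolding A_def using Bc by simp
  have Aij: "\<And>i j. i < n \<Longrightarrow> j < n \<Longrightarrow> A $$ (i,j) = p i * B $$ (i,j) * pinv j"
    unfolding A_def using Bc by simp
  have Asym: "transpose_mat A = A"
  proof (rule eq_matI)
    fix i j assume "i < dim_row A" "j < dim_col A"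
    then have i: "i < n" and j: "j < n" using Ac by auto
    have "A $$ (j,i) = p j * B $$ (j,i) * (1 / p i)" using Aij[OF j i] unfolding pinv_def p_def by simp
    also have "\<dots> = p i * B $$ (i,j) * (1 / p j)"
      by (rule sym_arith) (use ppos[OF i] ppos[OF j] symc[OF i j] psq[OF i] psq[OF j] in auto)
    also have "\<dots> = A $$ (i,j)" using Aij[OF i j] unfolding pinv_def p_def by simp
    finally show "transpose_mat A $$ (i, j) = A $$ (i, j)" using i j Ac by simp
  qed (use Ac in auto)
  define C where "C = dg n m * A * dg n m"
  have Cc: "C \<in> carrier_mat n n" unfolding C_def using Ac by simp
  have Cij: "\<And>i j. i < n \<Longrightarrow> j < n \<Longrightarrow> C $$ (i,j) = m i * A $$ (i,j) * m j"
    unfolding C_def using Ac by simp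
  have Csym: "transpose_mat C = C"
  proof (rule eq_matI)
    fix i j assume "i < dim_row C" "j < dim_col C"
    then have i: "i < n" and j: "j < n" using Cc by auto
    have "A $$ (j,i) = A $$ (i,j)" using Asym i j Ac
      by (metis carrier_matD(1) carrier_matD(2) index_transpose_mat(1))
    then show "transpose_mat C $$ (i, j) = C $$ (i, j)" using i j Cc Cij[OF i j] Cij[OF j i] by simp
  qed (use Cc in auto)
  have cpB: "char_poly B = char_poly A"
  proof (rule sim_char[OF Bc Ac dg_carrier dg_carrier])
    show "dg n pinv * dg n p = 1\<^sub>m n" by (rule eq_matI) (auto simp: ppinv)
    show "dg n p * dg n pinv = 1\<^sub>m n" by (rule eq_matI) (auto simp: ppinv)
    show "B = dg n pinv * A * dg n p"
      by (rule eq_matI) (use Bc Ac ppinv in \<open>auto simp: Aij mult.assoc[symmetric]\<close>)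
  qed
  define MBM where "MBM = dg n m * B * dg n m"
  have MBMc: "MBM \<in> carrier_mat n n" unfolding MBM_def using Bc by simp
  have MBMij: "\<And>i j. i < n \<Longrightarrow> j < n \<Longrightarrow> MBM $$ (i,j) = m i * B $$ (i,j) * m j"
    unfolding MBM_def using Bc by simp
  have cpMBM: "char_poly MBM = char_poly C"
  proof (rule sim_char[OF MBMc Cc dg_carrier dg_carrier])
    show "dg n pinv * dg n p = 1\<^sub>m n" by (rule eq_matI) (auto simp: ppinv)
    show "dg n p * dg n pinv = 1\<^sub>m n" by (rule eq_matI) (auto simp: ppinv)
    show "MBM = dg n pinv * C * dg n p"
    proof (rule eq_matI)
      fix i j assume "i < dim_row (dg n pinv * C * dg n p)" "j < dim_col (dg n pinv * C * dg n p)"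
      then have i: "i < n" and j: "j < n" by auto
      have "(dg n pinv * C * dg n p) $$ (i,j) = pinv i * (m i * (p i * B $$ (i,j) * pinv j) * m j) * p j"
        using i j Cc by (simp add: Cij Aij)
      also have "\<dots> = (pinv i * p i) * (m i * B $$ (i,j) * m j) * (pinv j * p j)" by (simp add: ac_simps)
      also have "\<dots> = MBM $$ (i,j)" using ppinv(1)[OF i] ppinv(1)[OF j] MBMij[OF i j] by simp
      finally show "MBM $$ (i, j) = (dg n pinv * C * dg n p) $$ (i, j)" by simp
    qed (use MBMc in auto)
  qed
  have BSc: "B * S \<in> carrier_mat n n" using Bc Sc by simp
  have cpBS: "char_poly (B * S) = char_poly MBM"
  proof (rule sim_char[OF BSc MBMc dg_carrier dg_carrier])
    show "dg n minv * dg n m = 1\<^sub>m n" by (rule eq_matI) (auto simp: mminv)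
    show "dg n m * dg n minv = 1\<^sub>m n" by (rule eq_matI) (auto simp: mminv)
    show "B * S = dg n minv * MBM * dg n m"
    proof (rule eq_matI)
      fix i j assume "i < dim_row (dg n minv * MBM * dg n m)" "j < dim_col (dg n minv * MBM * dg n m)"
      then have i: "i < n" and j: "j < n" by auto
      have "(dg n minv * MBM * dg n m) $$ (i,j) = minv i * (m i * B $$ (i,j) * m j) * m j"
        using i j MBMc by (simp add: MBMij)
      also have "\<dots> = (minv i * m i) * B $$ (i,j) * (m j * m j)" by (simp add: ac_simps)
      also have "\<dots> = B $$ (i,j) * s j" using mminv(1)[OF i] mm[OF j] by simp
      also have "\<dots> = (B * S) $$ (i,j)" unfolding Sd using Bc i j by simp
      finally show "(B * S) $$ (i, j) = (dg n minv * MBM * dg n m) $$ (i, j)" by simp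
    qed (use BSc in auto)
  qed
  have SBc: "S * B \<in> carrier_mat n n" using Bc Sc by simp
  have cpSB: "char_poly (S * B) = char_poly MBM"
  proof (rule sim_char[OF SBc MBMc dg_carrier dg_carrier])
    show "dg n m * dg n minv = 1\<^sub>m n" by (rule eq_matI) (auto simp: mminv)
    show "dg n minv * dg n m = 1\<^sub>m n" by (rule eq_matI) (auto simp: mminv)
    show "S * B = dg n m * MBM * dg n minv"
    proof (rule eq_matI)
      fix i j assume "i < dim_row (dg n m * MBM * dg n minv)" "j < dim_col (dg n m * MBM * dg n minv)"
      then have i: "i < n" and j: "j < n" by auto
      have "(dg n m * MBM * dg n minv) $$ (i,j) = m i * (m i * B $$ (i,j) * m j) * minv j"
        using i j MBMc by (simp add: MBMij)
      also have "\<dots> = (m i * m i) * B $$ (i,j) * (m j * minv j)" by (simp add: ac_simps)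
      also have "\<dots> = s i * B $$ (i,j)" using mminv(2)[OF j] mm[OF i] by simp
      also have "\<dots> = (S * B) $$ (i,j)" unfolding Sd using Bc i j by simp
      finally show "(S * B) $$ (i, j) = (dg n m * MBM * dg n minv) $$ (i, j)" by simp
    qed (use SBc in auto)
  qed
  have ACA: "dg n minv * C * dg n minv = A"
  proof (rule eq_matI)
    fix i j assume "i < dim_row A" "j < dim_col A"
    then have i: "i < n" and j: "j < n" using Ac by auto
    have "(dg n minv * C * dg n minv) $$ (i,j) = minv i * (m i * A $$ (i,j) * m j) * minv j"
      using i j Cc by (simp add: Cij)
    also have "\<dots> = (minv i * m i) * A $$ (i,j) * (m j * minv j)" by (simp add: ac_simps)
    also have "\<dots> = A $$ (i,j)" using mminv(1)[OF i] mminv(2)[OF j] by simp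
    finally show "(dg n minv * C * dg n minv) $$ (i,j) = A $$ (i,j)" .
  qed (use Ac in auto)
  obtain QA lA where QA: "QA \<in> carrier_mat n n" "transpose_mat QA * QA = 1\<^sub>m n" "QA * transpose_mat QA = 1\<^sub>m n"
    and AQ: "A = QA * dg n (\<lambda>i. lA ! i) * transpose_mat QA" and lA: "sorted lA" "length lA = n"
    and seA: "sorted_eigenvalues A = lA"
    using sym_spectral[OF Ac Asym] by blast
  obtain QC lC where QC: "QC \<in> carrier_mat n n" "transpose_mat QC * QC = 1\<^sub>m n" "QC * transpose_mat QC = 1\<^sub>m n"
    and CQ: "C = QC * dg n (\<lambda>i. lC ! i) * transpose_mat QC" and lC: "sorted lC" "length lC = n"
    and seC: "sorted_eigenvalues C = lC"
    using sym_spectral[OF Cc Csym] by blast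
  have seB: "sorted_eigenvalues B = lA" using eig_cong[OF cpB] seA by simp
  have seMBM: "sorted_eigenvalues MBM = lC" using eig_cong[OF cpMBM] seC by simp
  have seBS: "sorted_eigenvalues (B * S) = lC" using eig_cong[OF cpBS] seMBM by simp
  have seSB: "sorted_eigenvalues (S * B) = lC" using eig_cong[OF cpSB] seMBM by simp
  have seQ: "sorted_eigenvalues (diag_sqrt S * B * diag_sqrt S) = lC"
    unfolding sqD using seMBM unfolding MBM_def .
  define SS where "SS = {S $$ (i,i) | i. i < n}"
  have SSeq: "SS = s ` {..<n}" unfolding SS_def s_def by auto
  have SSfin: "finite SS" unfolding SSeq by simp
  have SSne: "SS \<noteq> {}" unfolding SSeq using k by auto
  define smin where "smin = Min SS"
  define smax where "smax = Max SS"
  have sle: "\<And>i. i < n \<Longrightarrow> smin \<le> s i \<and> s i \<le> smax"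
    unfolding smin_def smax_def using SSfin SSeq by auto
  have sminpos: "smin > 0"
  proof -
    have "smin \<in> SS" unfolding smin_def using SSfin SSne by (rule Min_in)
    then show ?thesis unfolding SSeq using spos by auto
  qed
  have smm: "smin \<le> smax" using sle[of 0] k by auto
  have mb: "\<And>i. i < n \<Longrightarrow> smin \<le> (m i)^2 \<and> (m i)^2 \<le> smax"
  proof -
    fix i assume i: "i < n"
    have "(m i)^2 = s i" unfolding m_def using spos[OF i] by simp
    then show "smin \<le> (m i)^2 \<and> (m i)^2 \<le> smax" using sle[OF i] by simp
  qed
  have minvb: "\<And>i. i < n \<Longrightarrow> 1 / smax \<le> (minv i)^2 \<and> (minv i)^2 \<le> 1 / smin"
  proof -
    fix i assume i: "i < n"
    have e: "(minv i)^2 = 1 / s i" unfolding minv_def using spos[OF i] by (simp add: power_divide)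
    show "1 / smax \<le> (minv i)^2 \<and> (minv i)^2 \<le> 1 / smin" unfolding e
      using sle[OF i] spos[OF i] sminpos by (auto simp: divide_simps)
  qed
  have H1: "\<And>t. lA ! k < t \<Longrightarrow> lC ! k < (if 0 \<le> t then smax * t else smin * t)"
  proof -
    fix t assume t: "lA ! k < t"
    obtain U where U: "U \<in> carrier_mat n (Suc k)" and nU: "negsp A t U (Suc k)"
      using sc_lt[OF QA(1) QA(2) AQ lA k t] by blast
    define U' where "U' = dg n minv * U"
    have U'c: "U' \<in> carrier_mat n (Suc k)" unfolding U'_def by (rule mult_carrier_mat[OF dg_carrier U])
    have "dg n m * U' = U" unfolding U'_def by (rule dg_cancel_left[OF mminv(2) U])
    then have "negsp A t (dg n m * U') (Suc k)" using nU by simp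
    from transport[OF Ac U'c mb this]
    have "negsp C (if t \<ge> 0 then smax * t else smin * t) U' (Suc k)" unfolding C_def .
    from sc_ge[OF QC(1) QC(2) QC(3) CQ lC k U'c this]
    show "lC ! k < (if 0 \<le> t then smax * t else smin * t)" .
  qed
  have H2: "\<And>t. lC ! k < t \<Longrightarrow> lA ! k < (if 0 \<le> t then (1/smin) * t else (1/smax) * t)"
  proof -
    fix t assume t: "lC ! k < t"
    obtain U where U: "U \<in> carrier_mat n (Suc k)" and nU: "negsp C t U (Suc k)"
      using sc_lt[OF QC(1) QC(2) CQ lC k t] by blast
    define U' where "U' = dg n m * U"
    have U'c: "U' \<in> carrier_mat n (Suc k)" unfolding U'_def by (rule mult_carrier_mat[OF dg_carrier U])
    have "dg n minv * U' = U" unfolding U'_def by (rule dg_cancel_left[OF mminv(1) U])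
    then have "negsp C t (dg n minv * U') (Suc k)" using nU by simp
    from transport[OF Cc U'c minvb this]
    have "negsp A (if t \<ge> 0 then (1/smin) * t else (1/smax) * t) U' (Suc k)" unfolding ACA .
    from sc_ge[OF QA(1) QA(2) QA(3) AQ lA k U'c this]
    show "lA ! k < (if 0 \<le> t then (1/smin) * t else (1/smax) * t)" .
  qed
  obtain \<theta> where th: "smin \<le> \<theta>" "\<theta> \<le> smax" "lC ! k = \<theta> * lA ! k"
    using final_arith[OF sminpos smm H1 H2] by blast
  show "\<exists>\<theta>. Min {S $$ (i,i) | i. i < n} \<le> \<theta> \<and> \<theta> \<le> Max {S $$ (i,i) | i. i < n} \<and>
           sorted_eigenvalues (B * S) ! k = sorted_eigenvalues (S * B) ! k \<and>
           sorted_eigenvalues (S * B) ! k = sorted_eigenvalues (diag_sqrt S * B * diag_sqrt S) ! k \<and>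
           sorted_eigenvalues (diag_sqrt S * B * diag_sqrt S) ! k = \<theta> * sorted_eigenvalues B ! k"
    using th unfolding seBS seSB seQ seB smin_def smax_def SS_def by blast
qed


end
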